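(* Let $f(\mathbf{x})=\mathbf{x}^{T}A\mathbf{x}+b^{T}\mathbf{x}+1$ with $A\in\mathbb{R}^{n\times n}$ symmetric and $b\in\mathbb{R}^n$, and suppose $f$ admits a monic Hermitian determinantal representation of size $2$ (equivalently, $Q/(1,1)=A-\frac14bb^T$ is negative semidefinite of rank at most $3$). Call two such representations $(A_1,\dots,A_n)$ and $(B_1,\dots,B_n)$ (Hermitian $2\times2$ matrices with $f(\mathbf{x})=\det(I_2+\sum_jx_jA_j)=\det(I_2+\sum_jx_jB_j)$) unitarily equivalent if there is a unitary $2\times 2$ matrix $U$ with $UA_jU^{*}=B_j$ for all $j$. Then: (i) if $\operatorname{rank}(Q/(1,1))=3$ (so $f$ has a Hermitian but no symmetric monic determinantal representation of size $2$), the monic Hermitian determinantal representations of size $2$ of $f$ form exactly two unitary equivalence classes; (ii) if $\operatorname{rank}(Q/(1,1))\le 2$, all monic Hermitian determinantal representations of size $2$ of $f$ are unitarily equivalent to one another. *)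

theory Defs
  imports "HOL-Analysis.Analysis"
begin

definition cadj :: "complex^2^2 \<Rightarrow> complex^2^2" where
  "cadj M = (\<chi> i k. cnj (M $ k $ i))"

definition hermitian2 :: "complex^2^2 \<Rightarrow> bool" where
  "hermitian2 M \<longleftrightarrow> cadj M = M"

definition unitary2 :: "complex^2^2 \<Rightarrow> bool" where
  "unitary2 U \<longleftrightarrow> U ** cadj U = mat 1 \<and> cadj U ** U = mat 1"

definition quad_f :: "real^'n^'n \<Rightarrow> real^'n \<Rightarrow> real^'n \<Rightarrow> real" where
  "quad_f A b x = x \<bullet> (A *v x) + b \<bullet> x + 1"

definition pencil2 :: "('n::finite \<Rightarrow> complex^2^2) \<Rightarrow> real^'n \<Rightarrow> complex^2^2" where
  "pencil2 P x = mat 1 + (\<Sum>j\<in>UNIV. (\<chi> i k. complex_of_real (x $ j) * P j $ i $ k))"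

definition mhdr2 :: "real^'n^'n \<Rightarrow> real^'n \<Rightarrow> ('n::finite \<Rightarrow> complex^2^2) set" where
  "mhdr2 A b = {P. (\<forall>j. hermitian2 (P j)) \<and>
      (\<forall>x. det (pencil2 P x) = complex_of_real (quad_f A b x))}"

definition unit_equiv2 :: "('n \<Rightarrow> complex^2^2) \<Rightarrow> ('n \<Rightarrow> complex^2^2) \<Rightarrow> bool" where
  "unit_equiv2 P Q \<longleftrightarrow> (\<exists>U. unitary2 U \<and> (\<forall>j. U ** P j ** cadj U = Q j))"

definition schur11 :: "real^'n^'n \<Rightarrow> real^'n \<Rightarrow> real^'n^'n" where
  "schur11 A b = A - (\<chi> i k. b $ i * b $ k / 4)"

end

theory Submission
  imports Defs "HOL-Analysis.Cross3"
begin

lemma mat2_eq: "(M::'a^2^2) = N \<longleftrightarrow> M$1$1 = N$1$1 \<and> M$1$2=N$1$2 \<and> M$2$1=N$2$1 \<and> M$2$2=N$2$2"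
  by (simp add: vec_eq_iff forall_2)

lemma mult2: "((A::'a::semiring_1^2^2) ** B) $ i $ k = A$i$1 * B$1$k + A$i$2*B$2$k"
  by (simp add: matrix_matrix_mult_def sum_2)

definition sig :: "real^3 \<Rightarrow> complex^2^2" where
 "sig v = (\<chi> i k. if i = 1 then (if k = 1 then complex_of_real (v$1) else Complex (v$2) (- v$3))
     else (if k = 1 then Complex (v$2) (v$3) else complex_of_real (- v$1)))"

lemma sig_simps[simp]: "sig v $1$1 = complex_of_real (v$1)" "sig v $1$2 = Complex (v$2) (- v$3)"
  "sig v $2$1 = Complex (v$2) (v$3)" "sig v $2$2 = complex_of_real (- v$1)"
  by (simp_all add: sig_def)

lemma cadj_simps[simp]: "cadj M $ i $ k = cnj (M $ k $ i)" by (simp add: cadj_def)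
lemma mat_simps2[simp]: "(mat c :: 'a::zero^2^2) $1$1 = c" "(mat c :: 'a::zero^2^2) $1$2 = 0"
  "(mat c :: 'a::zero^2^2) $2$1 = 0" "(mat c :: 'a::zero^2^2) $2$2 = c"
  by (simp_all add: mat_def)

lemma cadj_mult: "cadj (A ** B) = cadj B ** cadj A"
  by (simp add: mat2_eq mult2 mult.commute)
lemma cadj_cadj[simp]: "cadj (cadj A) = A" by (simp add: mat2_eq)
lemma cadj_one[simp]: "cadj (mat 1) = mat 1" by (simp add: mat2_eq)
lemma cadj_sig[simp]: "cadj (sig v) = sig v" by (simp add: mat2_eq complex_eq_iff)

lemma unitary2_one: "unitary2 (mat 1)" by (simp add: unitary2_def mat2_eq)
lemma unitary2_cadj: "unitary2 U \<Longrightarrow> unitary2 (cadj U)" by (simp add: unitary2_def)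
lemma unitary2_mult: assumes "unitary2 U" "unitary2 V" shows "unitary2 (U ** V)"
proof -
  have "U ** V ** cadj (U ** V) = U ** (V ** cadj V) ** cadj U"
    by (simp add: cadj_mult matrix_mul_assoc)
  moreover have "cadj (U ** V) ** (U ** V) = cadj V ** (cadj U ** U) ** V"
    by (simp add: cadj_mult matrix_mul_assoc)
  ultimately show ?thesis using assms by (simp add: unitary2_def)
qed

definition E :: "('n \<Rightarrow> real^3) \<Rightarrow> ('n \<Rightarrow> real^3) \<Rightarrow> bool" where
  "E u w \<longleftrightarrow> (\<exists>U. unitary2 U \<and> (\<forall>j. U ** sig (u j) ** cadj U = sig (w j)))"

lemma E_refl: "E u u" unfolding E_def using unitary2_one by (intro exI[of _ "mat 1"]) simp

lemma E_sym: assumes "E u w" shows "E w u"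
proof -
  obtain U where U: "unitary2 U" "\<And>j. U ** sig (u j) ** cadj U = sig (w j)" using assms E_def by blast
  have "cadj U ** sig (w j) ** cadj (cadj U) = sig (u j)" for j
  proof -
    have "cadj U ** sig (w j) ** cadj (cadj U) = (cadj U ** U) ** sig (u j) ** (cadj U ** U)"
      by (simp add: U(2)[symmetric] matrix_mul_assoc)
    thus ?thesis using U(1) by (simp add: unitary2_def)
  qed
  thus ?thesis unfolding E_def using unitary2_cadj[OF U(1)] by blast
qed

lemma E_trans: assumes "E u v" "E v w" shows "E u w"
proof -
  obtain U where U: "unitary2 U" "\<And>j. U ** sig (u j) ** cadj U = sig (v j)" using assms E_def by blast
  obtain V where V: "unitary2 V" "\<And>j. V ** sig (v j) ** cadj V = sig (w j)" using assms E_def by blast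
  have "(V ** U) ** sig (u j) ** cadj (V ** U) = sig (w j)" for j
    by (simp add: cadj_mult matrix_mul_assoc flip: V(2) U(2))
  thus ?thesis unfolding E_def using unitary2_mult[OF V(1) U(1)] by blast
qed

definition H :: "real^3 \<Rightarrow> real^3 \<Rightarrow> real^3" where
  "H m v = (2 * (m \<bullet> v) / (m \<bullet> m)) *\<^sub>R m - v"

lemma scaleR2[simp]: "((r::real) *\<^sub>R (M::complex^2^2)) $ i $ k = complex_of_real r * M $ i $ k"
  by (simp only: vector_scaleR_component) (simp add: scaleR_conv_of_real)

lemma inner3: "(m::real^3) \<bullet> v = m$1 * v$1 + m$2 * v$2 + m$3 * v$3"
  by (simp add: inner_vec_def sum_3)

lemma sig_scaleR: "sig (r *\<^sub>R v) = r *\<^sub>R sig v"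
  by (simp add: mat2_eq complex_eq_iff)

lemma cadj_scaleR: "cadj (r *\<^sub>R M) = r *\<^sub>R cadj M"
  by (simp add: mat2_eq)

lemma sig_cube: "sig m ** sig v ** sig m = sig ((2 * (m \<bullet> v)) *\<^sub>R m - (m \<bullet> m) *\<^sub>R v)"
  by (simp add: mat2_eq mult2 complex_eq_iff inner3 algebra_simps)

lemma sig_sq: "sig m ** sig m = (m \<bullet> m) *\<^sub>R mat 1"
  by (simp add: mat2_eq mult2 complex_eq_iff inner3 algebra_simps)

definition halfU :: "real^3 \<Rightarrow> complex^2^2" where
  "halfU m = (1 / norm m) *\<^sub>R sig m"

lemma halfU_unitary: assumes "m \<noteq> 0" shows "unitary2 (halfU m)"
proof -
  have "halfU m ** cadj (halfU m) = ((1 / norm m) * (1 / norm m) * (m \<bullet> m)) *\<^sub>R mat 1"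
    unfolding halfU_def cadj_scaleR cadj_sig matrix_scalar_ac scalar_matrix_assoc[symmetric] sig_sq
    by simp
  also have "(1 / norm m) * (1 / norm m) * (m \<bullet> m) = 1" using assms
    by (simp add: dot_square_norm power2_eq_square)
  finally show ?thesis unfolding unitary2_def
    by (simp add: halfU_def cadj_scaleR)
qed

lemma halfU_conj: assumes "m \<noteq> 0" shows "halfU m ** sig v ** cadj (halfU m) = sig (H m v)"
proof -
  have "halfU m ** sig v ** cadj (halfU m) = ((1 / norm m) * (1 / norm m)) *\<^sub>R (sig m ** sig v ** sig m)"
    unfolding halfU_def cadj_scaleR cadj_sig matrix_scalar_ac scalar_matrix_assoc[symmetric]
    by simp
  also have "\<dots> = sig (H m v)" unfolding sig_cube sig_scaleR[symmetric] H_def using assms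
    by (simp add: dot_square_norm power2_eq_square algebra_simps divide_simps)
  finally show ?thesis .
qed

lemma E_H: assumes "m \<noteq> 0" shows "E u (\<lambda>j. H m (u j))"
  unfolding E_def using halfU_unitary[OF assms] halfU_conj[OF assms] by blast

lemma cnorm_eq: assumes "Re (a * cnj a) = Re (b * cnj b)" shows "cmod a = cmod b"
proof -
  have "cmod a ^ 2 = cmod b ^ 2" using assms unfolding cmod_power2 by (simp add: power2_eq_square)
  thus ?thesis by (simp add: power2_eq_iff_nonneg)
qed

lemma re_cmod_eq: assumes "Re w1 = Re w2" "cmod w1 = cmod w2" shows "w1 = w2 \<or> w1 = cnj w2"
proof -
  have "Im w1 ^ 2 = Im w2 ^ 2" using assms cmod_power2[of w1] cmod_power2[of w2] by simp
  hence "Im w1 = Im w2 \<or> Im w1 = - Im w2" by (simp add: power2_eq_iff)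
  thus ?thesis using assms(1) by (auto simp: complex_eq_iff)
qed

lemma lemma_b: assumes "y * cnj p = z * cnj a" "cmod p = cmod a" "a \<noteq> 0"
  shows "y = (p / a) * z"
proof -
  have p0: "p \<noteq> 0" using assms by auto
  have "y * (p * cnj p) = p * (z * cnj a)" using assms(1) by (metis mult.assoc mult.commute)
  hence "y * of_real (cmod p ^ 2) = p * z * cnj a" by (simp only: complex_norm_square mult.assoc)
  hence "y * of_real (cmod a ^ 2) = p * z * cnj a" using assms(2) by simp
  hence "y * (a * cnj a) = p * z * cnj a" by (simp only: complex_norm_square)
  moreover have "cnj a \<noteq> 0" using assms by simp
  ultimately have "y * a = p * z" by (metis mult.assoc mult.commute mult_right_cancel)
  thus ?thesis using assms(3) by (simp add: field_simps)
qed

lemma lemma_c: assumes "Re (d * cnj a) = 0" "Re (d * cnj b) = 0" "Im (b * cnj a) \<noteq> 0" shows "d = 0"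
proof -
  have e1: "Re d * Re a + Im d * Im a = 0" "Re d * Re b + Im d * Im b = 0"
    using assms by simp_all
  have e2: "Im b * Re a - Re b * Im a \<noteq> 0" using assms(3) by simp
  have "Re d * (Im b * Re a - Re b * Im a) = (Re d * Re a + Im d * Im a) * Im b - (Re d * Re b + Im d * Im b) * Im a"
    by (simp add: algebra_simps)
  hence r: "Re d = 0" using e1 e2 by simp
  have "Im d * (Im b * Re a - Re b * Im a) = (Re d * Re b + Im d * Im b) * Re a - (Re d * Re a + Im d * Im a) * Re b"
    by (simp add: algebra_simps)
  hence "Im d = 0" using e1 e2 by simp
  with r show ?thesis by (simp add: complex_eq_iff)
qed

lemma twoD_aux:
  fixes z y :: "'n \<Rightarrow> complex"
  assumes G: "\<And>j l. Re (z j * cnj (z l)) = Re (y j * cnj (y l))" and zk: "z k \<noteq> 0"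
    and m: "Im (z m * cnj (z k)) \<noteq> 0" and ym: "y m * cnj (y k) = z m * cnj (z k)"
  shows "y j = (y k / z k) * z j"
proof -
  define \<zeta> where "\<zeta> = y k / z k"
  have nk: "cmod (y k) = cmod (z k)" using cnorm_eq G[of k k] by metis
  have c1: "cmod \<zeta> = 1" using nk zk by (simp add: \<zeta>_def norm_divide)
  have ymz: "y m = \<zeta> * z m" using lemma_b[OF ym nk zk] by (simp add: \<zeta>_def)
  have zc: "\<zeta> * cnj \<zeta> = 1"
  proof -
    have "\<zeta> * cnj \<zeta> = of_real (cmod \<zeta> ^2)" by (simp only: complex_norm_square)
    thus ?thesis using c1 by simp
  qed
  have a: "\<zeta> * cnj (y k) = cnj (z k)"
  proof -
    have "\<zeta> * cnj (y k) = (y k * cnj (y k)) / z k" by (simp add: \<zeta>_def)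
    also have "\<dots> = of_real (cmod (z k) ^2) / z k" by (simp only: complex_norm_square[symmetric] nk)
    also have "\<dots> = cnj (z k)" using zk by (simp only: complex_norm_square) simp
    finally show ?thesis .
  qed
  define d where "d = y j - \<zeta> * z j"
  have "Re (d * cnj (y k)) = Re (y j * cnj (y k)) - Re (z j * (\<zeta> * cnj (y k)))"
    by (simp add: d_def algebra_simps)
  also have "\<dots> = 0" using a G[of j k] by simp
  finally have d1: "Re (d * cnj (y k)) = 0" .
  have "Re (d * cnj (y m)) = Re (y j * cnj (y m)) - Re (z j * cnj (z m) * (\<zeta> * cnj \<zeta>))"
    by (simp add: d_def ymz algebra_simps)
  also have "\<dots> = 0" using zc G[of j m] by simp
  finally have d2: "Re (d * cnj (y m)) = 0" .
  have d3: "Im (y m * cnj (y k)) \<noteq> 0" using ym m by simp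
  have "d = 0" using lemma_c[OF d1 d2 d3] .
  thus ?thesis by (simp add: d_def \<zeta>_def)
qed

lemma twoD:
  fixes z y :: "'n \<Rightarrow> complex"
  assumes G: "\<And>j l. Re (z j * cnj (z l)) = Re (y j * cnj (y l))"
  shows "\<exists>\<zeta>. cmod \<zeta> = 1 \<and> ((\<forall>j. y j = \<zeta> * z j) \<or> (\<forall>j. y j = \<zeta> * cnj (z j)))"
proof (cases "\<forall>j. z j = 0")
  case True
  have "y j = 0" for j using cnorm_eq[OF G[of j j]] True by simp
  thus ?thesis using True by (intro exI[of _ 1]) simp
next
  case False
  then obtain k where zk: "z k \<noteq> 0" by blast
  have nk: "cmod (y k) = cmod (z k)" using cnorm_eq G[of k k] by metis
  have c1: "cmod (y k / z k) = 1" using nk zk by (simp add: norm_divide)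
  have E: "y j * cnj (y k) = z j * cnj (z k) \<or> y j * cnj (y k) = cnj (z j * cnj (z k))" for j
    by (rule re_cmod_eq) (use G[of j k] nk cnorm_eq[OF G[of j j]] in \<open>simp_all add: norm_mult\<close>)
  show ?thesis
  proof (cases "\<forall>j. Im (z j * cnj (z k)) = 0")
    case True
    have "y j * cnj (y k) = z j * cnj (z k)" for j
      using E[of j] True[rule_format, of j] by (auto simp: complex_eq_iff)
    hence "y j = (y k / z k) * z j" for j using lemma_b nk zk by blast
    thus ?thesis using c1 by blast
  next
    case False
    then obtain m where m: "Im (z m * cnj (z k)) \<noteq> 0" by blast
    from E[of m] show ?thesis
    proof
      assume "y m * cnj (y k) = z m * cnj (z k)"
      hence "y j = (y k / z k) * z j" for j using twoD_aux[OF G zk m] by blast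
      thus ?thesis using c1 by blast
    next
      assume h: "y m * cnj (y k) = cnj (z m * cnj (z k))"
      have G': "Re (cnj (z j) * cnj (cnj (z l))) = Re (y j * cnj (y l))" for j l
        using G[of j l] by simp
      have "y j = (y k / cnj (z k)) * cnj (z j)" for j
        by (rule twoD_aux[where z="\<lambda>j. cnj (z j)", OF G']) (use zk m h in auto)
      moreover have "cmod (y k / cnj (z k)) = 1" using nk zk by (simp add: norm_divide)
      ultimately show ?thesis by blast
    qed
  qed
qed

definition F3 :: "real^3 \<Rightarrow> real^3" where "F3 v = vector [v$1, v$2, - v$3]"
definition cnjM :: "complex^2^2 \<Rightarrow> complex^2^2" where "cnjM M = (\<chi> i k. cnj (M$i$k))"
lemma cnjM_simps[simp]: "cnjM M $ i $ k = cnj (M $ i $ k)" by (simp add: cnjM_def)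
lemma F3_simps[simp]: "F3 v $ 1 = v $ 1" "F3 v $ 2 = v $ 2" "F3 v $ 3 = - v $ 3" by (simp_all add: F3_def)

lemma sig_F3: "sig (F3 v) = cnjM (sig v)" by (simp add: mat2_eq complex_eq_iff)
lemma cnjM_mult: "cnjM (A ** B) = cnjM A ** cnjM B" by (simp add: mat2_eq mult2)
lemma cnjM_cadj: "cnjM (cadj A) = cadj (cnjM A)" by (simp add: mat2_eq)
lemma cnjM_one[simp]: "cnjM (mat 1) = mat 1" by (simp add: mat2_eq)
lemma unitary2_cnjM: "unitary2 U \<Longrightarrow> unitary2 (cnjM U)"
  unfolding unitary2_def by (metis cnjM_cadj cnjM_mult cnjM_one)

lemma E_F3: assumes "E u w" shows "E (\<lambda>j. F3 (u j)) (\<lambda>j. F3 (w j))"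
proof -
  obtain U where U: "unitary2 U" "\<And>j. U ** sig (u j) ** cadj U = sig (w j)" using assms E_def by blast
  have "cnjM U ** sig (F3 (u j)) ** cadj (cnjM U) = sig (F3 (w j))" for j
    by (simp add: sig_F3 flip: U(2) cnjM_cadj cnjM_mult)
  thus ?thesis unfolding E_def using unitary2_cnjM[OF U(1)] by blast
qed

definition Dz :: "complex \<Rightarrow> real^3 \<Rightarrow> real^3" where
  "Dz \<zeta> v = vector [v$1, Re (\<zeta> * Complex (v$2) (v$3)), Im (\<zeta> * Complex (v$2) (v$3))]"
lemma Dz_simps[simp]: "Dz \<zeta> v $ 1 = v $ 1" "Dz \<zeta> v $ 2 = Re (\<zeta> * Complex (v$2) (v$3))"
  "Dz \<zeta> v $ 3 = Im (\<zeta> * Complex (v$2) (v$3))" by (simp_all add: Dz_def)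

definition diagU :: "complex \<Rightarrow> complex^2^2" where
  "diagU \<zeta> = (\<chi> i k. if i = 1 then (if k = 1 then 1 else 0) else (if k = 1 then 0 else \<zeta>))"
lemma diagU_simps[simp]: "diagU \<zeta> $1$1 = 1" "diagU \<zeta> $1$2 = 0" "diagU \<zeta> $2$1 = 0" "diagU \<zeta> $2$2 = \<zeta>"
  by (simp_all add: diagU_def)

lemma E_D: assumes "cmod \<zeta> = 1" shows "E u (\<lambda>j. Dz \<zeta> (u j))"
proof -
  have h: "Re \<zeta> * Re \<zeta> + Im \<zeta> * Im \<zeta> = 1" using assms cmod_power2[of \<zeta>] by (simp add: power2_eq_square)
  have "unitary2 (diagU \<zeta>)" using h by (simp add: unitary2_def mat2_eq mult2 complex_eq_iff)
  moreover have "diagU \<zeta> ** sig v ** cadj (diagU \<zeta>) = sig (Dz \<zeta> v)" for v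
  proof -
    have h': "Im \<zeta> * (Im \<zeta> * x) + Re \<zeta> * (Re \<zeta> * x) = x" for x by (metis h distrib_right add.commute mult_1 mult.assoc)
    show ?thesis using h by (simp add: mat2_eq mult2 complex_eq_iff algebra_simps h')
  qed
  ultimately show ?thesis unfolding E_def by blast
qed

lemma H_inner: assumes "m \<noteq> 0" shows "H m v \<bullet> H m v' = v \<bullet> v'"
proof -
  have "m \<bullet> m \<noteq> 0" using assms by simp
  thus ?thesis unfolding H_def
    by (simp add: inner_diff_left inner_diff_right inner_commute field_simps) (simp add: algebra_simps inner_commute)?
qed

lemma normalize: fixes v :: "real^3" assumes "v \<noteq> 0" shows "\<exists>m. m \<noteq> 0 \<and> H m v = norm v *\<^sub>R axis 1 1"
proof (cases "v + norm v *\<^sub>R axis 1 1 = 0")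
  case True
  hence v: "v = - (norm v *\<^sub>R axis 1 1)" by (simp add: add_eq_0_iff)
  have "H (axis 2 1) v = norm v *\<^sub>R axis 1 1"
    by (subst v) (simp add: H_def vec_eq_iff forall_3 inner3 axis_def)
  moreover have "axis 2 1 \<noteq> (0::real^3)" by (simp add: axis_eq_0_iff)
  ultimately show ?thesis by blast
next
  case False
  let ?m = "v + norm v *\<^sub>R axis 1 1"
  have n2: "v \<bullet> v = norm v ^ 2" by (simp add: dot_square_norm)
  have a1: "v \<bullet> axis 1 1 = v $ 1" "(axis 1 1 :: real^3) \<bullet> axis 1 1 = 1" by (simp_all add: inner_axis inner_axis_axis inner_real_def)
  have mm: "?m \<bullet> ?m = 2 * (norm v * (norm v + v$1))"
    by (simp add: inner_add_left inner_add_right inner_commute a1 n2 power2_eq_square algebra_simps)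
  have mv: "?m \<bullet> v = norm v * (norm v + v$1)"
    by (simp add: inner_add_left inner_add_right inner_commute a1 n2 power2_eq_square algebra_simps)
  have "?m \<bullet> ?m \<noteq> 0" using False by simp
  hence nz: "norm v * (norm v + v$1) \<noteq> 0" using mm by simp
  have "H ?m v = norm v *\<^sub>R axis 1 1" unfolding H_def mm mv using nz by simp
  thus ?thesis using False by blast
qed

lemma E_main:
  fixes u w :: "'n \<Rightarrow> real^3"
  assumes G: "\<And>i k. u i \<bullet> u k = w i \<bullet> w k"
  shows "E u w \<or> E (\<lambda>j. F3 (u j)) w"
proof (cases "\<forall>j. u j = 0")
  case True
  have "w j = 0" for j using G[of j j] True by simp
  hence "w = u" using True by auto
  thus ?thesis using E_refl by blast
next
  case False
  then obtain j1 where u1: "u j1 \<noteq> 0" by blast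
  have w1: "w j1 \<noteq> 0" using G[of j1 j1] u1 by auto
  have nn: "norm (w j1) = norm (u j1)" using G[of j1 j1] by (simp add: norm_eq_sqrt_inner)
  obtain m where m: "m \<noteq> 0" "H m (u j1) = norm (u j1) *\<^sub>R axis 1 1" using normalize[OF u1] by blast
  obtain m' where m': "m' \<noteq> 0" "H m' (w j1) = norm (u j1) *\<^sub>R axis 1 1" using normalize[OF w1] nn by auto
  define u' where "u' = (\<lambda>j. H m (u j))"
  define w' where "w' = (\<lambda>j. H m' (w j))"
  have Eu: "E u u'" unfolding u'_def by (rule E_H[OF m(1)])
  have Ew: "E w w'" unfolding w'_def by (rule E_H[OF m'(1)])
  have G': "u' i \<bullet> u' k = w' i \<bullet> w' k" for i k
    unfolding u'_def w'_def H_inner[OF m(1)] H_inner[OF m'(1)] by (rule G)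
  define c where "c = norm (u j1)"
  have c0: "c \<noteq> 0" using u1 by (simp add: c_def)
  have uj1: "u' j1 = c *\<^sub>R axis 1 1" "w' j1 = c *\<^sub>R axis 1 1"
    using m m' by (simp_all add: u'_def w'_def c_def)
  have first: "u' j $ 1 = w' j $ 1" for j
  proof -
    have "c * u' j $ 1 = c * w' j $ 1" using G'[of j j1] unfolding uj1 by (simp add: inner3 axis_def)
    thus ?thesis using c0 by simp
  qed
  define z where "z = (\<lambda>j. Complex (u' j $ 2) (u' j $ 3))"
  define y where "y = (\<lambda>j. Complex (w' j $ 2) (w' j $ 3))"
  have Gz: "Re (z j * cnj (z l)) = Re (y j * cnj (y l))" for j l
    using G'[of j l] first[of j] first[of l] by (simp add: z_def y_def inner3)
  obtain \<zeta> where \<zeta>: "cmod \<zeta> = 1" "(\<forall>j. y j = \<zeta> * z j) \<or> (\<forall>j. y j = \<zeta> * cnj (z j))"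
    using twoD[of z y] Gz by blast
  from \<zeta>(2) show ?thesis
  proof
    assume h: "\<forall>j. y j = \<zeta> * z j"
    have "w' = (\<lambda>j. Dz \<zeta> (u' j))"
    proof
      fix j
      have "y j = \<zeta> * z j" using h by blast
      thus "w' j = Dz \<zeta> (u' j)" using first[of j]
        by (simp add: vec_eq_iff forall_3 y_def z_def complex_eq_iff)
    qed
    hence "E u' w'" using E_D[OF \<zeta>(1)] by simp
    thus ?thesis using Eu Ew E_trans E_sym by blast
  next
    assume h: "\<forall>j. y j = \<zeta> * cnj (z j)"
    have "w' = (\<lambda>j. Dz \<zeta> (F3 (u' j)))"
    proof
      fix j
      have "y j = \<zeta> * cnj (z j)" using h by blast
      thus "w' j = Dz \<zeta> (F3 (u' j))" using first[of j]
        by (simp add: vec_eq_iff forall_3 y_def z_def complex_eq_iff)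
    qed
    hence "E (\<lambda>j. F3 (u' j)) w'" using E_D[OF \<zeta>(1)] by simp
    moreover have "E (\<lambda>j. F3 (u j)) (\<lambda>j. F3 (u' j))" by (rule E_F3[OF Eu])
    ultimately show ?thesis using Ew E_trans E_sym by blast
  qed
qed

lemma E_selfconj: assumes "n \<noteq> 0" "\<And>j. n \<bullet> u j = 0" shows "E u (\<lambda>j. F3 (u j))"
proof -
  have "E u (\<lambda>j. H n (u j))" by (rule E_H[OF assms(1)])
  moreover have "H n (u j) = - u j" for j using assms by (simp add: H_def)
  ultimately have e1: "E u (\<lambda>j. - u j)" by simp
  have a3: "axis 3 1 \<noteq> (0::real^3)" by (simp add: axis_eq_0_iff)
  have "E (\<lambda>j. - u j) (\<lambda>j. H (axis 3 1) (- u j))" by (rule E_H[OF a3])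
  moreover have "H (axis 3 1) (- u j) = F3 (u j)" for j
    by (simp add: H_def vec_eq_iff forall_3 inner3 axis_def)
  ultimately have "E (\<lambda>j. - u j) (\<lambda>j. F3 (u j))" by simp
  thus ?thesis using e1 E_trans by blast
qed

definition tr2 :: "complex^2^2 \<Rightarrow> complex" where "tr2 M = M$1$1 + M$2$2"

lemma tr2_comm: "tr2 (A ** B) = tr2 (B ** A)" by (simp add: tr2_def mult2 algebra_simps)

lemma tr2_sig3: "tr2 (sig a ** sig b ** sig c) = Complex 0 (2 * (a \<bullet> (cross3 (b) (c))))"
  by (simp add: tr2_def mult2 complex_eq_iff inner3 cross_components algebra_simps)

lemma trip_F3: "F3 a \<bullet> (cross3 (F3 b) (F3 c)) = - (a \<bullet> (cross3 (b) (c)))"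
  by (simp add: inner3 cross_components algebra_simps)

lemma E_trip: assumes "E u w" shows "w i \<bullet> (cross3 (w j) (w k)) = u i \<bullet> (cross3 (u j) (u k))"
proof -
  obtain U where U: "unitary2 U" "\<And>j. U ** sig (u j) ** cadj U = sig (w j)" using assms E_def by blast
  have uu: "cadj U ** U = mat 1" using U(1) unitary2_def by blast
  have "sig (w i) ** sig (w j) ** sig (w k) = U ** (sig (u i) ** sig (u j) ** sig (u k)) ** cadj U"
    unfolding U(2)[symmetric]
    by (simp add: matrix_mul_assoc) (simp add: matrix_mul_assoc[symmetric] uu)
  hence "tr2 (sig (w i) ** sig (w j) ** sig (w k)) = tr2 (sig (u i) ** sig (u j) ** sig (u k))"
    by (metis tr2_comm matrix_mul_assoc uu matrix_mul_lid)
  thus ?thesis unfolding tr2_sig3 by simp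
qed

lemma E_F3_trip: assumes "E u (\<lambda>j. F3 (u j))" shows "u i \<bullet> (cross3 (u j) (u k)) = 0"
  using E_trip[OF assms, of i j k] trip_F3 by simp

lemma cyc: "(x::real^3) \<bullet> (cross3 (y) (z)) = z \<bullet> (cross3 (x) (y))"
  by (simp add: inner3 cross_components algebra_simps)

lemma normal_exists: assumes "\<And>i j k. u i \<bullet> (cross3 (u j) (u k)) = 0" shows "\<exists>n. n \<noteq> 0 \<and> (\<forall>j. n \<bullet> u j = 0)"
proof (cases "\<forall>j. u j = 0")
  case True
  thus ?thesis by (intro exI[of _ "axis 1 1"]) (simp add: axis_eq_0_iff)
next
  case False
  then obtain a where a: "u a \<noteq> 0" by blast
  show ?thesis
  proof (cases "\<exists>b. cross3 (u a) (u b) \<noteq> 0")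
    case True
    then obtain b where "cross3 (u a) (u b) \<noteq> 0" by blast
    moreover have "(cross3 (u a) (u b)) \<bullet> u j = 0" for j using assms[of j a b] by (simp add: inner_commute)
    ultimately show ?thesis by blast
  next
    case False
    obtain e where e: "cross3 (u a) e \<noteq> 0" using cross_basis_nonzero[OF a] by blast
    have "(cross3 (u a) (e)) \<bullet> u j = 0" for j
    proof -
      have "(cross3 (u a) (e)) \<bullet> u j = u j \<bullet> (cross3 (u a) (e))" by (simp add: inner_commute)
      also have "\<dots> = e \<bullet> (cross3 (u j) (u a))" by (rule cyc)
      also have "cross3 (u j) (u a) = 0" using False cross_skew[of "u j" "u a"] by simp
      finally show ?thesis by simp
    qed
    thus ?thesis using e by blast
  qed
qed

definition ha :: "complex^2^2 \<Rightarrow> real" where "ha M = Re (M$1$1 + M$2$2) / 2"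
definition hv :: "complex^2^2 \<Rightarrow> real^3" where
  "hv M = vector [Re (M$1$1 - M$2$2) / 2, Re (M$2$1), Im (M$2$1)]"
lemma hv_simps[simp]: "hv M $ 1 = Re (M$1$1 - M$2$2) / 2" "hv M $ 2 = Re (M$2$1)" "hv M $ 3 = Im (M$2$1)"
  by (simp_all add: hv_def)

lemma herm_decomp: assumes "hermitian2 M" shows "M = mat (complex_of_real (ha M)) + sig (hv M)"
proof -
  have "cadj M = M" using assms hermitian2_def by blast
  hence h: "cnj (M$1$1) = M$1$1" "cnj (M$2$2) = M$2$2" "cnj (M$2$1) = M$1$2"
    by (simp_all add: mat2_eq)
  hence "Im (M$1$1) = 0" "Im (M$2$2) = 0" "Re (M$1$2) = Re (M$2$1)" "Im (M$1$2) = - Im (M$2$1)"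
    by (simp_all add: complex_eq_iff)
  thus ?thesis by (simp add: mat2_eq complex_eq_iff ha_def field_simps)
qed

lemma herm_entries: assumes "hermitian2 M"
  shows "M$1$1 = complex_of_real (ha M + hv M $ 1)" "M$2$2 = complex_of_real (ha M - hv M $ 1)"
    "M$2$1 = Complex (hv M $ 2) (hv M $ 3)" "M$1$2 = Complex (hv M $ 2) (- hv M $ 3)"
proof -
  have e: "M = mat (complex_of_real (ha M)) + sig (hv M)" by (rule herm_decomp[OF assms])
  show "M$1$1 = complex_of_real (ha M + hv M $ 1)" by (subst e) simp
  show "M$2$2 = complex_of_real (ha M - hv M $ 1)" by (subst e) simp
  show "M$2$1 = Complex (hv M $ 2) (hv M $ 3)" by (subst e) simp
  show "M$1$2 = Complex (hv M $ 2) (- hv M $ 3)" by (subst e) simp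
qed

lemma herm_cnjM: assumes "hermitian2 M"
  shows "hermitian2 (cnjM M)" "ha (cnjM M) = ha M" "hv (cnjM M) = F3 (hv M)"
proof -
  have "cadj M = M" using assms hermitian2_def by blast
  hence "cadj (cnjM M) = cnjM M" by (metis cnjM_cadj)
  thus "hermitian2 (cnjM M)" by (simp add: hermitian2_def)
  show "ha (cnjM M) = ha M" by (simp add: ha_def)
  show "hv (cnjM M) = F3 (hv M)" by (simp add: vec_eq_iff forall_3)
qed

definition Um :: "('n::finite \<Rightarrow> complex^2^2) \<Rightarrow> real^'n^3" where
  "Um P = (\<chi> c j. hv (P j) $ c)"
definition alpha :: "('n::finite \<Rightarrow> complex^2^2) \<Rightarrow> real^'n \<Rightarrow> real" where
  "alpha P x = (\<Sum>j\<in>UNIV. x$j * ha (P j))"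

lemma Um_col: "Um P *v axis j 1 = hv (P j)"
  by (simp add: matrix_vector_mult_basis column_def Um_def vec_eq_iff)

lemma Um_comp: "(Um P *v x) $ c = (\<Sum>j\<in>UNIV. x$j * hv (P j) $ c)"
  by (simp add: matrix_vector_mult_def Um_def mult.commute)

lemma pencil_entry: "pencil2 P x $ i $ k = (if i = k then 1 else 0) + (\<Sum>j\<in>UNIV. complex_of_real (x$j) * P j $ i $ k)"
  by (simp add: pencil2_def mat_def)

lemma det_pencil: assumes "\<And>j. hermitian2 (P j)"
  shows "det (pencil2 P x) = complex_of_real ((1 + alpha P x)^2 - (Um P *v x) \<bullet> (Um P *v x))"
proof -
  note he = herm_entries[OF assms]
  have s11: "(\<Sum>j\<in>UNIV. complex_of_real (x$j) * P j $ 1 $ 1) = complex_of_real (\<Sum>j\<in>UNIV. x$j * (ha (P j) + hv (P j) $ 1))"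
    by (simp only: he of_real_sum of_real_mult)
  have s22: "(\<Sum>j\<in>UNIV. complex_of_real (x$j) * P j $ 2 $ 2) = complex_of_real (\<Sum>j\<in>UNIV. x$j * (ha (P j) - hv (P j) $ 1))"
    by (simp only: he of_real_sum of_real_mult)
  have s21: "(\<Sum>j\<in>UNIV. complex_of_real (x$j) * P j $ 2 $ 1) = Complex ((Um P *v x) $ 2) ((Um P *v x) $ 3)"
    by (simp add: he Um_comp complex_eq_iff Re_sum Im_sum del: hv_simps)
  have s12: "(\<Sum>j\<in>UNIV. complex_of_real (x$j) * P j $ 1 $ 2) = Complex ((Um P *v x) $ 2) (- (Um P *v x) $ 3)"
    by (simp add: he Um_comp complex_eq_iff Re_sum Im_sum sum_negf del: hv_simps)
  have r1: "(\<Sum>j\<in>UNIV. x$j * (ha (P j) + hv (P j) $ 1)) = alpha P x + (Um P *v x) $ 1"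
    by (simp add: Um_comp alpha_def distrib_left sum.distrib)
  have r2: "(\<Sum>j\<in>UNIV. x$j * (ha (P j) - hv (P j) $ 1)) = alpha P x - (Um P *v x) $ 1"
    by (simp add: Um_comp alpha_def right_diff_distrib sum_subtractf)
  have p11: "pencil2 P x $1$1 = complex_of_real (1 + alpha P x + (Um P *v x) $ 1)"
    by (simp only: pencil_entry s11 r1) simp
  have p22: "pencil2 P x $2$2 = complex_of_real (1 + alpha P x - (Um P *v x) $ 1)"
    by (simp only: pencil_entry s22 r2) simp
  have p21: "pencil2 P x $2$1 = Complex ((Um P *v x) $ 2) ((Um P *v x) $ 3)"
    by (simp only: pencil_entry s21) simp
  have p12: "pencil2 P x $1$2 = Complex ((Um P *v x) $ 2) (- (Um P *v x) $ 3)"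
    by (simp only: pencil_entry s12) simp
  show ?thesis unfolding det_2 p11 p22 p21 p12
    by (simp add: complex_eq_iff inner3 power2_eq_square algebra_simps)
qed

lemma mvm_neg: "(M::real^'n^'m) *v (- x) = - (M *v x)"
  by (simp add: matrix_vector_mult_def vec_eq_iff sum_negf)

lemma rep_props: assumes "P \<in> mhdr2 A b"
  shows "\<And>j. hermitian2 (P j)" "\<And>x. 2 * alpha P x = b \<bullet> x"
    "\<And>x. (Um P *v x) \<bullet> (Um P *v x) = (b \<bullet> x)^2 / 4 - x \<bullet> (A *v x)"
proof -
  show h: "\<And>j. hermitian2 (P j)" using assms mhdr2_def by blast
  have eq: "(1 + alpha P x)^2 - (Um P *v x) \<bullet> (Um P *v x) = x \<bullet> (A *v x) + b \<bullet> x + 1" for x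
  proof -
    have "det (pencil2 P x) = complex_of_real (quad_f A b x)" using assms mhdr2_def by blast
    thus ?thesis unfolding det_pencil[OF h] quad_f_def of_real_eq_iff .
  qed
  have an: "alpha P (- x) = - alpha P x" for x by (simp add: alpha_def sum_negf)
  fix x
  have e1: "(1 + alpha P x)^2 - (Um P *v x) \<bullet> (Um P *v x) = x \<bullet> (A *v x) + b \<bullet> x + 1" by (rule eq)
  have e2: "(1 - alpha P x)^2 - (Um P *v x) \<bullet> (Um P *v x) = x \<bullet> (A *v x) - b \<bullet> x + 1"
    using eq[of "- x"] by (simp add: an mvm_neg)
  show a: "2 * alpha P x = b \<bullet> x" using e1 e2 by (simp add: power2_eq_square algebra_simps)
  show "(Um P *v x) \<bullet> (Um P *v x) = (b \<bullet> x)^2 / 4 - x \<bullet> (A *v x)"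
    using e1 a[symmetric] by (simp add: power2_eq_square algebra_simps)
qed

lemma rep_ha: assumes "P \<in> mhdr2 A b" shows "ha (P j) = b $ j / 2"
proof -
  have "2 * alpha P (axis j 1) = b \<bullet> axis j 1" by (rule rep_props(2)[OF assms])
  moreover have "alpha P (axis j 1) = ha (P j)"
  proof -
    have "(if i = j then 1 else 0) * ha (P i) = (if i = j then ha (P i) else 0)" for i by simp
    thus ?thesis by (simp add: alpha_def axis_def)
  qed
  ultimately show ?thesis by (simp add: inner_axis)
qed

lemma conj_rep: assumes "P \<in> mhdr2 A b" shows "(\<lambda>j. cnjM (P j)) \<in> mhdr2 A b"
proof -
  have h: "\<And>j. hermitian2 (P j)" by (rule rep_props(1)[OF assms])
  have pe: "pencil2 (\<lambda>j. cnjM (P j)) x = cnjM (pencil2 P x)" for x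
    by (simp add: mat2_eq pencil_entry cnj_sum)
  have "det (cnjM X) = cnj (det X)" for X by (simp add: det_2)
  hence "det (pencil2 (\<lambda>j. cnjM (P j)) x) = complex_of_real (quad_f A b x)" for x
    using assms unfolding pe mhdr2_def by simp
  thus ?thesis unfolding mhdr2_def using herm_cnjM(1)[OF h] by blast
qed

lemma axis_mv: "axis i 1 \<bullet> ((M::real^'n^'n) *v axis k 1) = M $ i $ k"
  by (metis cart_eq_inner_axis inner_commute matrix_vector_mult_basis column_def vec_lambda_beta)

lemma sym_quad_eq: fixes M N :: "real^'n^'n"
  assumes "transpose M = M" "transpose N = N" "\<And>x. x \<bullet> (M *v x) = x \<bullet> (N *v x)"
  shows "M = N"
proof -
  have q: "(a + c) \<bullet> (K *v (a + c)) = a \<bullet> (K *v a) + a \<bullet> (K *v c) + c \<bullet> (K *v a) + c \<bullet> (K *v c)"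
    for K :: "real^'n^'n" and a c by (simp add: matrix_vector_right_distrib inner_add_left inner_add_right)
  have sM: "M $ k $ i = M $ i $ k" for i k using assms(1) by (metis transpose_def vec_lambda_beta)
  have sN: "N $ k $ i = N $ i $ k" for i k using assms(2) by (metis transpose_def vec_lambda_beta)
  have "M $ i $ k = N $ i $ k" for i k
  proof -
    have d1: "M $ i $ i = N $ i $ i" "M $ k $ k = N $ k $ k" using assms(3)[of "axis i 1"] assms(3)[of "axis k 1"]
      by (simp_all add: axis_mv)
    have "(axis i 1 + axis k 1) \<bullet> (M *v (axis i 1 + axis k 1)) = (axis i 1 + axis k 1) \<bullet> (N *v (axis i 1 + axis k 1))"
      by (rule assms(3))
    hence "M $ i $ i + M $ i $ k + M $ k $ i + M $ k $ k = N $ i $ i + N $ i $ k + N $ k $ i + N $ k $ k"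
      unfolding q axis_mv .
    thus ?thesis using d1 sM[of i k] sN[of i k] by simp
  qed
  thus ?thesis by (simp add: vec_eq_iff)
qed

lemma schur_eq: assumes "transpose A = A" "P \<in> mhdr2 A b"
  shows "schur11 A b = - (transpose (Um P) ** Um P)"
proof (rule sym_quad_eq)
  show "transpose (schur11 A b) = schur11 A b" using assms(1)
    by (simp add: schur11_def transpose_def vec_eq_iff mult.commute)
  show "transpose (- (transpose (Um P) ** Um P)) = - (transpose (Um P) ** Um P)"
    by (simp add: transpose_def vec_eq_iff matrix_matrix_mult_def mult.commute)
  fix x
  have bb: "x \<bullet> ((\<chi> i k. b $ i * b $ k / 4) *v x) = (b \<bullet> x)^2 / 4"
    by (simp add: inner_vec_def matrix_vector_mult_def power2_eq_square sum_distrib_left sum_distrib_right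
        sum_divide_distrib mult_ac)
  have "x \<bullet> (schur11 A b *v x) = x \<bullet> (A *v x) - (b \<bullet> x)^2 / 4"
    unfolding schur11_def matrix_vector_mult_diff_rdistrib inner_diff_right bb ..
  also have "\<dots> = - ((Um P *v x) \<bullet> (Um P *v x))" using rep_props(3)[OF assms(2)] by simp
  also have "\<dots> = x \<bullet> (- (transpose (Um P) ** Um P) *v x)"
  proof -
    have n: "(- M) *v y = - (M *v y)" for M :: "real^'n^'n" and y
      by (simp add: matrix_vector_mult_def vec_eq_iff sum_negf)
    have "x \<bullet> ((transpose (Um P) ** Um P) *v x) = (Um P *v x) \<bullet> (Um P *v x)"
      by (simp add: matrix_vector_mul_assoc[symmetric] inner_commute[of x] dot_lmul_matrix)
    thus ?thesis by (simp add: n)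
  qed
  finally show "x \<bullet> (schur11 A b *v x) = x \<bullet> (- (transpose (Um P) ** Um P) *v x)" .
qed

lemma rank_neg: "rank (- M) = rank (M::real^'n^'m)"
proof -
  have n: "(- M) *v y = M *v (- y)" for y
    by (simp add: matrix_vector_mult_def vec_eq_iff sum_negf)
  have "range (\<lambda>x. (- M) *v x) = range (\<lambda>x. M *v x)"
  proof (auto simp: n)
    fix x show "M *v x \<in> range (\<lambda>y. M *v - y)" by (rule image_eqI[of _ _ "- x"]) auto
  qed
  thus ?thesis by (simp add: rank_dim_range)
qed

lemma rank_le2: fixes U :: "real^'n^3" assumes "n \<noteq> 0" "\<And>j. n \<bullet> (U *v axis j 1) = 0"
  shows "rank (transpose U ** U) \<le> 2"
proof -
  have "n v* U = 0"
  proof -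
    have "(n v* U) $ j = n \<bullet> (U *v axis j 1)" for j
      by (simp add: vector_matrix_mult_def matrix_vector_mult_basis column_def inner_vec_def)
    thus ?thesis using assms(2) by (simp add: vec_eq_iff)
  qed
  hence o: "n \<bullet> (U *v x) = 0" for x by (metis dot_lmul_matrix inner_zero_left)
  have "\<not> surj ((*v) U)"
  proof
    assume "surj ((*v) U)"
    then obtain x where "n = U *v x" by (metis surjD)
    thus False using o[of x] assms(1) by simp
  qed
  hence "rank U \<noteq> 3" using full_rank_surjective[of U] by simp
  moreover have "rank U \<le> 3" using rank_bound[of U] by simp
  ultimately have "rank U \<le> 2" by simp
  thus ?thesis using rank_mul_le_right[of "transpose U" U] by simp
qed

lemma rank_ge3: fixes U :: "real^'n^3" assumes "\<And>n. n \<noteq> 0 \<Longrightarrow> \<exists>j. n \<bullet> (U *v axis j 1) \<noteq> 0"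
  shows "rank (transpose U ** U) \<ge> 3"
proof -
  have "rank U = 3"
  proof (rule ccontr)
    assume "rank U \<noteq> 3"
    moreover have "rank U \<le> 3" using rank_bound[of U] by simp
    ultimately have d: "dim (range (\<lambda>x. U *v x)) < DIM(real^3)" by (simp add: rank_dim_range)
    obtain n where n: "n \<noteq> 0" "\<And>y. y \<in> span (range (\<lambda>x. U *v x)) \<Longrightarrow> orthogonal n y"
      using orthogonal_to_subspace_exists[OF d] by blast
    have "n \<bullet> (U *v axis j 1) = 0" for j using n(2)[of "U *v axis j 1"]
      by (simp add: orthogonal_def span_base)
    thus False using assms[OF n(1)] by blast
  qed
  hence "surj (\<lambda>x. U *v x)" using full_rank_surjective[of U] by simp
  then obtain Y where Y: "U ** Y = mat 1" using matrix_right_invertible_surjective by blast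
  have "transpose Y ** ((transpose U ** U) ** Y) = transpose (U ** Y) ** (U ** Y)"
    by (simp add: matrix_transpose_mul matrix_mul_assoc)
  also have "\<dots> = mat 1" by (simp add: Y)
  finally have "rank (transpose Y ** ((transpose U ** U) ** Y)) = 3" using rank_I[where 'n=3] by simp
  moreover have "rank (transpose Y ** ((transpose U ** U) ** Y)) \<le> rank ((transpose U ** U) ** Y)"
    by (rule rank_mul_le_right)
  moreover have "rank ((transpose U ** U) ** Y) \<le> rank (transpose U ** U)" by (rule rank_mul_le_left)
  ultimately show ?thesis by simp
qed

lemma matrix_add_rdistrib2: "((A::complex^2^2) + B) ** (C::complex^2^2) = A ** C + B ** C"
  by (simp add: mat2_eq mult2 algebra_simps)

lemma mat_comm2: "(U::complex^2^2) ** mat c = mat c ** U" by (simp add: mat2_eq mult2 mult.commute)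

lemma conj_shift: assumes "unitary2 U"
  shows "U ** (mat c + S) ** cadj U = mat c + U ** S ** cadj U"
proof -
  have "U ** (mat c + S) ** cadj U = U ** mat c ** cadj U + U ** S ** cadj U"
    by (simp add: matrix_add_ldistrib matrix_add_rdistrib2)
  also have "U ** mat c ** cadj U = mat c" using assms
    by (metis mat_comm2 matrix_mul_assoc unitary2_def matrix_mul_rid)
  finally show ?thesis .
qed

lemma E_to_ue: assumes "\<And>j. P j = mat (complex_of_real (a j)) + sig (u j)"
  "\<And>j. Q j = mat (complex_of_real (a j)) + sig (w j)" "E u w" shows "unit_equiv2 P Q"
proof -
  obtain U where U: "unitary2 U" "\<And>j. U ** sig (u j) ** cadj U = sig (w j)" using assms(3) E_def by blast
  have "U ** P j ** cadj U = Q j" for j unfolding assms(1,2) conj_shift[OF U(1)] U(2) ..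
  thus ?thesis unfolding unit_equiv2_def using U(1) by blast
qed

lemma ue_to_E: assumes "\<And>j. P j = mat (complex_of_real (a j)) + sig (u j)"
  "\<And>j. Q j = mat (complex_of_real (a j)) + sig (w j)" "unit_equiv2 P Q" shows "E u w"
proof -
  obtain U where U: "unitary2 U" "\<And>j. U ** P j ** cadj U = Q j" using assms(3) unit_equiv2_def by blast
  have "U ** sig (u j) ** cadj U = sig (w j)" for j
    using U(2)[of j] unfolding assms(1,2) conj_shift[OF U(1)] by simp
  thus ?thesis unfolding E_def using U(1) by blast
qed

lemma ue_refl: "unit_equiv2 P P" unfolding unit_equiv2_def using unitary2_one by (intro exI[of _ "mat 1"]) simp

lemma ue_sym: assumes "unit_equiv2 P Q" shows "unit_equiv2 Q P"
proof -
  obtain U where U: "unitary2 U" "\<And>j. U ** P j ** cadj U = Q j" using assms unit_equiv2_def by blast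
  have "cadj U ** Q j ** cadj (cadj U) = P j" for j
  proof -
    have "cadj U ** Q j ** cadj (cadj U) = (cadj U ** U) ** P j ** (cadj U ** U)"
      by (simp add: U(2)[symmetric] matrix_mul_assoc)
    thus ?thesis using U(1) by (simp add: unitary2_def)
  qed
  thus ?thesis unfolding unit_equiv2_def using unitary2_cadj[OF U(1)] by blast
qed

lemma ue_trans: assumes "unit_equiv2 P Q" "unit_equiv2 Q R" shows "unit_equiv2 P R"
proof -
  obtain U where U: "unitary2 U" "\<And>j. U ** P j ** cadj U = Q j" using assms unit_equiv2_def by blast
  obtain V where V: "unitary2 V" "\<And>j. V ** Q j ** cadj V = R j" using assms unit_equiv2_def by blast
  have "(V ** U) ** P j ** cadj (V ** U) = R j" for j
    by (simp add: cadj_mult matrix_mul_assoc flip: V(2) U(2))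
  thus ?thesis unfolding unit_equiv2_def using unitary2_mult[OF V(1) U(1)] by blast
qed

lemma rep_decomp: assumes "P \<in> mhdr2 A b"
  shows "P j = mat (complex_of_real (ha (P j))) + sig (hv (P j))"
    "cnjM (P j) = mat (complex_of_real (ha (P j))) + sig (F3 (hv (P j)))"
proof -
  have h: "hermitian2 (P j)" using rep_props(1)[OF assms] .
  show "P j = mat (complex_of_real (ha (P j))) + sig (hv (P j))" by (rule herm_decomp[OF h])
  show "cnjM (P j) = mat (complex_of_real (ha (P j))) + sig (F3 (hv (P j)))"
    using herm_decomp[OF herm_cnjM(1)[OF h]] herm_cnjM(2,3)[OF h] by simp
qed

lemma gram_eq: assumes "P \<in> mhdr2 A b" "Q \<in> mhdr2 A b"
  shows "hv (P i) \<bullet> hv (P k) = hv (Q i) \<bullet> hv (Q k)"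
proof -
  have N: "(Um P *v x) \<bullet> (Um P *v x) = (Um Q *v x) \<bullet> (Um Q *v x)" for x
    using rep_props(3)[OF assms(1)] rep_props(3)[OF assms(2)] by simp
  have sum: "Um R *v (axis i 1 + axis k 1) = hv (R i) + hv (R k)" for R :: "'a \<Rightarrow> complex^2^2"
    by (simp add: matrix_vector_right_distrib Um_col)
  have "(hv (P i) + hv (P k)) \<bullet> (hv (P i) + hv (P k)) = (hv (Q i) + hv (Q k)) \<bullet> (hv (Q i) + hv (Q k))"
    using N[of "axis i 1 + axis k 1"] unfolding sum .
  moreover have "hv (P i) \<bullet> hv (P i) = hv (Q i) \<bullet> hv (Q i)" using N[of "axis i 1"] by (simp add: Um_col)
  moreover have "hv (P k) \<bullet> hv (P k) = hv (Q k) \<bullet> hv (Q k)" using N[of "axis k 1"] by (simp add: Um_col)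
  ultimately show ?thesis by (simp add: inner_add_left inner_add_right inner_commute)
qed

lemma K1: assumes "P \<in> mhdr2 A b" "Q \<in> mhdr2 A b"
  shows "unit_equiv2 P Q \<or> unit_equiv2 (\<lambda>j. cnjM (P j)) Q"
proof -
  have ha: "ha (Q j) = ha (P j)" for j using rep_ha[OF assms(1), of j] rep_ha[OF assms(2), of j] by simp
  have dQ: "Q j = mat (complex_of_real (ha (P j))) + sig (hv (Q j))" for j
    using rep_decomp(1)[OF assms(2), of j] ha by simp
  have "E (\<lambda>j. hv (P j)) (\<lambda>j. hv (Q j)) \<or> E (\<lambda>j. F3 (hv (P j))) (\<lambda>j. hv (Q j))"
    by (rule E_main) (rule gram_eq[OF assms])
  thus ?thesis
  proof
    assume "E (\<lambda>j. hv (P j)) (\<lambda>j. hv (Q j))"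
    hence "unit_equiv2 P Q" by (rule E_to_ue[OF rep_decomp(1)[OF assms(1)] dQ])
    thus ?thesis by blast
  next
    assume "E (\<lambda>j. F3 (hv (P j))) (\<lambda>j. hv (Q j))"
    hence "unit_equiv2 (\<lambda>j. cnjM (P j)) Q" by (rule E_to_ue[OF rep_decomp(2)[OF assms(1)] dQ])
    thus ?thesis by blast
  qed
qed

lemma K3: assumes "P \<in> mhdr2 A b" "n \<noteq> 0" "\<And>j. n \<bullet> hv (P j) = 0"
  shows "unit_equiv2 P (\<lambda>j. cnjM (P j))"
  by (rule E_to_ue[OF rep_decomp(1)[OF assms(1)] rep_decomp(2)[OF assms(1)]])
     (rule E_selfconj[OF assms(2,3)])

lemma K4: assumes "P \<in> mhdr2 A b" "unit_equiv2 P (\<lambda>j. cnjM (P j))"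
  shows "hv (P i) \<bullet> cross3 (hv (P j)) (hv (P k)) = 0"
proof -
  have "E (\<lambda>j. hv (P j)) (\<lambda>j. F3 (hv (P j)))"
    by (rule ue_to_E[OF rep_decomp(1)[OF assms(1)] rep_decomp(2)[OF assms(1)] assms(2)])
  thus ?thesis by (rule E_F3_trip)
qed

theorem mainTheorem5:
  fixes A :: "real^'n^'n" and b :: "real^'n"
  assumes "transpose A = A"
    and "mhdr2 A b \<noteq> {}"
  shows "(rank (schur11 A b) = 3 \<longrightarrow>
           card (mhdr2 A b // {(P, Q). P \<in> mhdr2 A b \<and> Q \<in> mhdr2 A b \<and> unit_equiv2 P Q}) = 2)
       \<and> (rank (schur11 A b) \<le> 2 \<longrightarrow>
           (\<forall>P\<in>mhdr2 A b. \<forall>Q\<in>mhdr2 A b. unit_equiv2 P Q))"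
proof -
  let ?M = "mhdr2 A b"
  let ?R = "{(P, Q). P \<in> ?M \<and> Q \<in> ?M \<and> unit_equiv2 P Q}"
  have rk: "rank (schur11 A b) = rank (transpose (Um P) ** Um P)" if "P \<in> ?M" for P
    using schur_eq[OF assms(1) that] rank_neg by simp
  show ?thesis
  proof (intro conjI impI)
    assume r3: "rank (schur11 A b) = 3"
    obtain P0 where P0: "P0 \<in> ?M" using assms(2) by blast
    define P1 where "P1 = (\<lambda>j. cnjM (P0 j))"
    have P1: "P1 \<in> ?M" using conj_rep[OF P0] P1_def by simp
    have ne: "\<not> unit_equiv2 P0 P1"
    proof
      assume "unit_equiv2 P0 P1"
      hence t: "\<And>i j k. hv (P0 i) \<bullet> cross3 (hv (P0 j)) (hv (P0 k)) = 0" using K4[OF P0] P1_def by blast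
      obtain n where n: "n \<noteq> 0" "\<forall>j. n \<bullet> hv (P0 j) = 0"
        using normal_exists[of "\<lambda>j. hv (P0 j)"] t by blast
      hence "rank (transpose (Um P0) ** Um P0) \<le> 2" using rank_le2[of n "Um P0"] by (simp add: Um_col)
      thus False using r3 rk[OF P0] by simp
    qed
    have eq: "equiv ?M ?R"
      apply (rule equivI)
         apply blast
        apply (rule refl_onI) apply (simp add: ue_refl)
       apply (rule symI) apply (blast intro: ue_sym)
      apply (rule transI) apply (blast intro: ue_trans)
      done
    have quot: "?M // ?R = {?R``{P0}, ?R``{P1}}"
    proof
      show "?M // ?R \<subseteq> {?R``{P0}, ?R``{P1}}"
      proof
        fix X assume "X \<in> ?M // ?R"
        then obtain Q where Q: "Q \<in> ?M" "X = ?R``{Q}" by (auto simp: quotient_def)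
        from K1[OF P0 Q(1)] have "(P0,Q) \<in> ?R \<or> (P1,Q) \<in> ?R" using P0 P1 Q P1_def by auto
        thus "X \<in> {?R``{P0}, ?R``{P1}}" using equiv_class_eq[OF eq] Q(2) by auto
      qed
      show "{?R``{P0}, ?R``{P1}} \<subseteq> ?M // ?R" using P0 P1 by (auto simp: quotient_def)
    qed
    have "?R``{P0} \<noteq> ?R``{P1}"
    proof
      assume "?R``{P0} = ?R``{P1}"
      hence "(P0, P1) \<in> ?R" by (rule eq_equiv_class[OF _ eq P1])
      thus False using ne by simp
    qed
    thus "card (?M // ?R) = 2" using quot by simp
  next
    assume r2: "rank (schur11 A b) \<le> 2"
    show "\<forall>P\<in>?M. \<forall>Q\<in>?M. unit_equiv2 P Q"
    proof (intro ballI)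
      fix P Q assume P: "P \<in> ?M" and Q: "Q \<in> ?M"
      have "\<exists>n. n \<noteq> 0 \<and> (\<forall>j. n \<bullet> hv (P j) = 0)"
      proof (rule ccontr)
        assume "\<not> (\<exists>n. n \<noteq> 0 \<and> (\<forall>j. n \<bullet> hv (P j) = 0))"
        hence "\<And>n. n \<noteq> 0 \<Longrightarrow> \<exists>j. n \<bullet> (Um P *v axis j 1) \<noteq> 0" by (auto simp: Um_col)
        hence "rank (transpose (Um P) ** Um P) \<ge> 3" by (rule rank_ge3)
        thus False using r2 rk[OF P] by simp
      qed
      then obtain n where "n \<noteq> 0" "\<And>j. n \<bullet> hv (P j) = 0" by blast
      hence c: "unit_equiv2 P (\<lambda>j. cnjM (P j))" using K3[OF P] by blast
      from K1[OF P Q] show "unit_equiv2 P Q" using c ue_trans by blast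
    qed
  qed
qed

end
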